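(* Let $n\ge 2$ and $1\le k\le n-1$ be integers, and let $z_1,\dots,z_n$ be indeterminates. Then \[ \Big(\prod_{i=0}^{k-1} i!\Big)^2\, n^{k-1}\,\Delta_{k+1}(H(n)) \;=\; \Delta_k(E(n)). \]
   Context: For $k\ge 0$ let $p_k=\sum_{i=1}^n z_i^k$ be the power sums. The Hermite matrix $H(n)$ is the matrix with entries $H(n)_{i,j}=p_{i+j-2}$ ($i,j\ge 1$). For an (infinite or finite) matrix $F$, $\Delta_k(F)$ denotes the determinant of its upper-left $k\times k$ submatrix. For distinct $i,j\in\{1,\dots,n\}$ and an integer $m\ge 0$, let $e^{(i,j)}_m$ be the elementary symmetric polynomial of degree $m$ in the $n-2$ variables $\{z_l: l\ne i,j\}$ (with $e^{(i,j)}_0=1$ and $e^{(i,j)}_m=0$ if $m>n-2$). $E(n)$ is the infinite matrix with entries, for $r,s\ge 1$, \[ E(n)_{r,s}=(r-1)!\,(s-1)!\sum_{1\le i<j\le n} e^{(i,j)}_{r-1}\,e^{(i,j)}_{s-1}\,(z_i-z_j)^2 . \] *)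

theory Defs
  imports "Jordan_Normal_Form.Determinant"
begin

text \<open>Polynomial identities in the indeterminates z_1..z_n are rendered as identities
holding for every assignment z :: nat => 'a in an arbitrary commutative ring
(only z 1, ..., z n are used).  Matrices are 1-indexed functions nat => nat => 'a.\<close>

definition power_sum :: "(nat \<Rightarrow> 'a::comm_ring_1) \<Rightarrow> nat \<Rightarrow> nat \<Rightarrow> 'a" where
  "power_sum z n k = (\<Sum>i\<in>{1..n}. z i ^ k)"

definition hermite_mat :: "(nat \<Rightarrow> 'a::comm_ring_1) \<Rightarrow> nat \<Rightarrow> nat \<Rightarrow> nat \<Rightarrow> 'a" where
  "hermite_mat z n i j = power_sum z n (i + j - 2)"

definition lead_minor :: "nat \<Rightarrow> (nat \<Rightarrow> nat \<Rightarrow> 'a::comm_ring_1) \<Rightarrow> 'a" where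
  "lead_minor k F = det (mat k k (\<lambda>(i, j). F (i + 1) (j + 1)))"

definition elem_sym :: "(nat \<Rightarrow> 'a::comm_ring_1) \<Rightarrow> nat set \<Rightarrow> nat \<Rightarrow> 'a" where
  "elem_sym z S m = (\<Sum>T\<in>{T. T \<subseteq> S \<and> card T = m}. \<Prod>l\<in>T. z l)"

definition e_ij :: "(nat \<Rightarrow> 'a::comm_ring_1) \<Rightarrow> nat \<Rightarrow> nat \<Rightarrow> nat \<Rightarrow> nat \<Rightarrow> 'a" where
  "e_ij z n i j m = elem_sym z ({1..n} - {i, j}) m"

definition E_mat :: "(nat \<Rightarrow> 'a::comm_ring_1) \<Rightarrow> nat \<Rightarrow> nat \<Rightarrow> nat \<Rightarrow> 'a" where
  "E_mat z n r s = of_nat (fact (r - 1) * fact (s - 1)) *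
     (\<Sum>(i, j)\<in>{(i, j). 1 \<le> i \<and> i < j \<and> j \<le> n}.
        e_ij z n i j (r - 1) * e_ij z n i j (s - 1) * (z i - z j)^2)"

end

theory Submission
  imports Defs
begin

definition Hm :: "'b::comm_ring_1 \<Rightarrow> (nat \<Rightarrow> 'b) \<Rightarrow> nat \<Rightarrow> 'b mat" where
  "Hm N p k = mat (Suc k) (Suc k) (\<lambda>(a,b). if a = 0 \<and> b = 0 then N else p (a+b))"
definition Gm :: "'b::comm_ring_1 \<Rightarrow> (nat \<Rightarrow> 'b) \<Rightarrow> nat \<Rightarrow> 'b mat" where
  "Gm N p k = mat k k (\<lambda>(a,b). N * p (a+b+2) - p (a+1) * p (b+1))"

lemma prod_list_diag: "A \<in> carrier_mat n n \<Longrightarrow> prod_list (diag_mat A) = (\<Prod>i<n. A $$ (i,i))"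
  unfolding diag_mat_def by (simp add: prod.list_conv_set_nth lessThan_atLeast0)

lemma schur:
  fixes N :: "'b::comm_ring_1"
  shows "N^k * det (Hm N p k) = N * det (Gm N p k)"
proof -
  define L :: "'b mat" where "L = mat (Suc k) (Suc k) (\<lambda>(a,b). if a = 0 then (if b = 0 then 1 else 0)
      else (if b = 0 then - p a else 0) + (if b = a then N else 0))"
  have Lc: "L \<in> carrier_mat (Suc k) (Suc k)" unfolding L_def by simp
  have Hc: "Hm N p k \<in> carrier_mat (Suc k) (Suc k)" unfolding Hm_def by simp
  have detL: "det L = N^k"
  proof -
    have "det L = prod_list (diag_mat L)"
      by (rule det_lower_triangular[OF _ Lc]) (auto simp: L_def)
    also have "\<dots> = (\<Prod>i<Suc k. L $$ (i,i))" by (rule prod_list_diag[OF Lc])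
    also have "\<dots> = (\<Prod>i<k. L $$ (Suc i, Suc i))" unfolding prod.lessThan_Suc_shift by (simp add: L_def del: prod.lessThan_Suc)
    also have "\<dots> = (\<Prod>i<k. N)" by (rule prod.cong) (auto simp: L_def)
    finally show ?thesis by simp
  qed
  have prod: "L * Hm N p k = four_block_mat (mat 1 1 (\<lambda>_. N)) (mat 1 k (\<lambda>(_,b). p (b+1))) (0\<^sub>m k 1) (Gm N p k)"
  proof (rule eq_matI)
    fix a b assume a: "a < dim_row (four_block_mat (mat 1 1 (\<lambda>_. N)) (mat 1 k (\<lambda>(_,b). p (b+1))) (0\<^sub>m k 1) (Gm N p k))"
      and b: "b < dim_col (four_block_mat (mat 1 1 (\<lambda>_. N)) (mat 1 k (\<lambda>(_,b). p (b+1))) (0\<^sub>m k 1) (Gm N p k))"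
    from a b have a': "a < Suc k" and b': "b < Suc k" by (auto simp: Gm_def)
    have "(L * Hm N p k) $$ (a,b) = (\<Sum>c<Suc k. L $$ (a,c) * Hm N p k $$ (c,b))"
      using a' b' Lc Hc by (simp add: index_mult_mat scalar_prod_def lessThan_atLeast0)
    also have "\<dots> = (if a = 0 then Hm N p k $$ (0,b) else - p a * Hm N p k $$ (0,b) + N * Hm N p k $$ (a,b))"
    proof (cases "a = 0")
      case True
      then show ?thesis by (simp add: L_def if_distrib[where f="\<lambda>x. x * _"] sum.If_cases cong: if_cong)
    next
      case False
      have "(\<Sum>c<Suc k. L $$ (a,c) * Hm N p k $$ (c,b)) = (\<Sum>c<Suc k. (if c = 0 then - p a * Hm N p k $$ (0,b) else 0) + (if c = a then N * Hm N p k $$ (a,b) else 0))"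
        using False a' by (intro sum.cong) (auto simp: L_def algebra_simps)
      also have "\<dots> = - p a * Hm N p k $$ (0,b) + N * Hm N p k $$ (a,b)"
        using a' by (simp add: sum.distrib)
      finally show ?thesis using False by simp
    qed
    also have "\<dots> = four_block_mat (mat 1 1 (\<lambda>_. N)) (mat 1 k (\<lambda>(_,b). p (b+1))) (0\<^sub>m k 1) (Gm N p k) $$ (a,b)"
      using a' b' by (cases a; cases b) (auto simp: Hm_def Gm_def algebra_simps)
    finally show "(L * Hm N p k) $$ (a,b) = four_block_mat (mat 1 1 (\<lambda>_. N)) (mat 1 k (\<lambda>(_,b). p (b+1))) (0\<^sub>m k 1) (Gm N p k) $$ (a,b)" .
  qed (auto simp: L_def Hm_def Gm_def)
  have "N^k * det (Hm N p k) = det (L * Hm N p k)" using det_mult[OF Lc Hc] detL by simp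
  also have "\<dots> = det (mat 1 1 (\<lambda>_. N)) * det (Gm N p k)"
    unfolding prod by (rule det_four_block_mat_lower_left_zero_col) (auto simp: Gm_def)
  also have "det (mat 1 1 (\<lambda>_. N)) = N"
    by (subst det_upper_triangular[of _ 1]) (auto simp: diag_mat_def upper_triangular_def)
  finally show ?thesis .
qed

lemma poly_eval_hom: "comm_ring_hom (\<lambda>q. poly q c)"
  by unfold_locales auto

lemma schur_ring:
  fixes N :: "'b::comm_ring_1"
  assumes "k \<ge> 1"
  shows "N^(k-1) * det (Hm N p k) = det (Gm N p k)"
proof -
  define X :: "'b poly" where "X = [:0,1:]"
  define P where "P = (\<lambda>i. [:p i:])"
  have "X * (X^(k-1) * det (Hm X P k)) = X * det (Gm X P k)"
    using schur[of X k P] assms by (cases k) (auto simp: algebra_simps)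
  hence "X * (X^(k-1) * det (Hm X P k) - det (Gm X P k)) = 0" by (simp add: algebra_simps)
  hence eq: "X^(k-1) * det (Hm X P k) = det (Gm X P k)"
    unfolding X_def by (simp add: mult_pCons_left)
  note h = comm_ring_hom.hom_det[OF poly_eval_hom[of N]]
  have m1: "map_mat (\<lambda>q. poly q N) (Hm X P k) = Hm N p k"
    by (rule eq_matI) (auto simp: Hm_def X_def P_def)
  have m2: "map_mat (\<lambda>q. poly q N) (Gm X P k) = Gm N p k"
    by (rule eq_matI) (auto simp: Gm_def X_def P_def)
  have "poly (X^(k-1) * det (Hm X P k)) N = poly (det (Gm X P k)) N" using eq by simp
  thus ?thesis using h[of "Hm X P k"] h[of "Gm X P k"] m1 m2 by (simp add: X_def)
qed

lemma elem_sym_0: "finite S \<Longrightarrow> elem_sym z S 0 = 1"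
proof -
  assume f: "finite S"
  have "{T. T \<subseteq> S \<and> card T = 0} = {{}}" using f by (auto dest: finite_subset)
  thus ?thesis by (simp add: elem_sym_def)
qed

lemma elem_sym_insert:
  assumes f: "finite S" and x: "x \<notin> S"
  shows "elem_sym z (insert x S) (Suc m) = elem_sym z S (Suc m) + z x * elem_sym z S m"
proof -
  have eq: "{T. T \<subseteq> insert x S \<and> card T = Suc m} =
     {T. T \<subseteq> S \<and> card T = Suc m} \<union> insert x ` {T. T \<subseteq> S \<and> card T = m}"
  proof (intro equalityI subsetI)
    fix T assume T: "T \<in> {T. T \<subseteq> insert x S \<and> card T = Suc m}"
    show "T \<in> {T. T \<subseteq> S \<and> card T = Suc m} \<union> insert x ` {T. T \<subseteq> S \<and> card T = m}"
    proof (cases "x \<in> T")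
      case True
      have fT: "finite T" using T f by (auto dest: finite_subset)
      have "T = insert x (T - {x})" using True by auto
      moreover have "T - {x} \<subseteq> S \<and> card (T - {x}) = m" using T True fT by auto
      ultimately show ?thesis by blast
    next
      case False thus ?thesis using T by auto
    qed
  next
    fix T assume "T \<in> {T. T \<subseteq> S \<and> card T = Suc m} \<union> insert x ` {T. T \<subseteq> S \<and> card T = m}"
    moreover have "\<forall>U. U \<subseteq> S \<longrightarrow> card (insert x U) = Suc (card U)"
      using x f by (metis card_insert_disjoint finite_subset subsetD)
    ultimately show "T \<in> {T. T \<subseteq> insert x S \<and> card T = Suc m}"
      by auto
  qed
  have fin1: "finite {T. T \<subseteq> S \<and> card T = Suc m}" using f by simp
  have fin2: "finite {T. T \<subseteq> S \<and> card T = m}" using f by simp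
  have disj: "{T. T \<subseteq> S \<and> card T = Suc m} \<inter> insert x ` {T. T \<subseteq> S \<and> card T = m} = {}" using x by auto
  have inj: "inj_on (insert x) {T. T \<subseteq> S \<and> card T = m}"
  proof (rule inj_onI)
    fix A B assume A: "A \<in> {T. T \<subseteq> S \<and> card T = m}" and B: "B \<in> {T. T \<subseteq> S \<and> card T = m}"
      and eq: "insert x A = insert x B"
    have "x \<notin> A" "x \<notin> B" using A B x by auto
    thus "A = B" using eq by (metis Diff_insert_absorb)
  qed
  have "elem_sym z (insert x S) (Suc m) = elem_sym z S (Suc m) + (\<Sum>T\<in>insert x ` {T. T \<subseteq> S \<and> card T = m}. \<Prod>l\<in>T. z l)"
    unfolding elem_sym_def eq by (rule sum.union_disjoint[OF fin1 _ disj]) (use fin2 in simp)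
  also have "(\<Sum>T\<in>insert x ` {T. T \<subseteq> S \<and> card T = m}. \<Prod>l\<in>T. z l) = (\<Sum>T\<in>{T. T \<subseteq> S \<and> card T = m}. \<Prod>l\<in>insert x T. z l)"
    by (rule sum.reindex[OF inj, unfolded comp_def])
  also have "\<dots> = (\<Sum>T\<in>{T. T \<subseteq> S \<and> card T = m}. z x * (\<Prod>l\<in>T. z l))"
  proof (rule sum.cong[OF refl])
    fix T assume T: "T \<in> {T. T \<subseteq> S \<and> card T = m}"
    hence "finite T" "x \<notin> T" using f x finite_subset by auto
    thus "(\<Prod>l\<in>insert x T. z l) = z x * (\<Prod>l\<in>T. z l)" by simp
  qed
  also have "\<dots> = z x * elem_sym z S m" by (simp add: elem_sym_def sum_distrib_left)
  finally show ?thesis .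
qed

lemma B_identity:
  fixes x y :: "'b::comm_ring_1"
  assumes e0: "e 0 = a 0" and e1: "e 1 = a 1 + (x+y) * a 0"
    and e2: "\<And>r. e (Suc (Suc r)) = a (Suc (Suc r)) + (x+y) * a (Suc r) + (x*y) * a r"
  shows "(x - y) * a r = (\<Sum>m\<le>r. (-1)^m * e (r-m) * (x^(m+1) - y^(m+1)))"
proof -
  define d where "d = (\<lambda>m. x^m - y^m)"
  define B where "B = (\<lambda>r. (\<Sum>m\<le>r. (-1)^m * e (r-m) * d (m+1)))"
  have drec: "d (Suc (Suc m)) = (x+y) * d (m+1) - (x*y) * d m" for m
    by (simp add: d_def algebra_simps)
  have B0: "B 0 = e 0 * (x - y)" by (simp add: B_def d_def)
  have B1: "B 1 = e 1 * (x - y) - (x+y) * B 0"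
    by (simp add: B_def d_def algebra_simps power2_eq_square)
  have B2: "B (Suc (Suc r)) = e (Suc (Suc r)) * (x - y) - (x+y) * B (Suc r) - (x*y) * B r" for r
  proof -
    have "B (Suc (Suc r)) = e (Suc (Suc r)) * d 1 + (\<Sum>m\<le>Suc r. (-1)^(m+1) * e (Suc r - m) * d (m+2))"
      unfolding B_def by (subst sum.atMost_Suc_shift) simp
    also have "(\<Sum>m\<le>Suc r. (-1)^(m+1) * e (Suc r - m) * d (m+2)) =
       (\<Sum>m\<le>Suc r. - (x+y) * ((-1)^m * e (Suc r - m) * d (m+1))) + (\<Sum>m\<le>Suc r. (x*y) * ((-1)^m * e (Suc r - m) * d m))"
      by (subst sum.distrib[symmetric], rule sum.cong) (auto simp: drec algebra_simps)
    also have "(\<Sum>m\<le>Suc r. - (x+y) * ((-1)^m * e (Suc r - m) * d (m+1))) = - (x+y) * B (Suc r)"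
      by (simp only: B_def sum_distrib_left)
    also have "(\<Sum>m\<le>Suc r. (x*y) * ((-1)^m * e (Suc r - m) * d m)) = - (x*y) * B r"
      by (subst sum.atMost_Suc_shift) (simp add: B_def d_def sum_distrib_left sum_negf[symmetric] algebra_simps)
    finally show ?thesis by (simp add: d_def algebra_simps)
  qed
  have "(x - y) * a r = B r \<and> (x - y) * a (Suc r) = B (Suc r)"
  proof (induction r)
    case 0
    have h0: "B 0 = (x-y)*a 0" by (simp add: B0 e0 algebra_simps)
    have h1: "B (Suc 0) = (x-y)*a (Suc 0)" using B1 e1 by (simp add: h0 algebra_simps)
    then show ?case using h0 h1 by simp
  next
    case (Suc r)
    have hA: "B r = (x-y) * a r" and hB: "B (Suc r) = (x-y) * a (Suc r)" using Suc by auto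
    have "B (Suc (Suc r)) = (x-y) * a (Suc (Suc r))"
      unfolding B2 e2 hA hB by (simp add: algebra_simps)
    then show ?case using hB by simp
  qed
  thus ?thesis by (simp add: B_def d_def)
qed

lemma pair_sum:
  fixes z :: "nat \<Rightarrow> 'b::comm_ring_1"
  shows "(\<Sum>(i,j)\<in>{(i, j). 1 \<le> i \<and> i < j \<and> j \<le> n}. (z i ^ A - z j ^ A) * (z i ^ B - z j ^ B))
     = of_nat n * power_sum z n (A+B) - power_sum z n A * power_sum z n B"
proof -
  define h where "h = (\<lambda>(i,j). z i ^ (A+B) - z i ^ A * z j ^ B)"
  define P where "P = {(i, j). 1 \<le> i \<and> i < j \<and> j \<le> (n::nat)}"
  define Q where "Q = {(i, j). 1 \<le> j \<and> j < i \<and> i \<le> (n::nat)}"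
  define D where "D = {(i, j). 1 \<le> i \<and> i = j \<and> j \<le> (n::nat)}"
  have fP: "finite P" by (rule finite_subset[of _ "{1..n}\<times>{1..n}"]) (auto simp: P_def)
  have fQ: "finite Q" by (rule finite_subset[of _ "{1..n}\<times>{1..n}"]) (auto simp: Q_def)
  have fD: "finite D" by (rule finite_subset[of _ "{1..n}\<times>{1..n}"]) (auto simp: D_def)
  have U: "{1..n}\<times>{1..n} = P \<union> Q \<union> D" by (auto simp: P_def Q_def D_def)
  have "(\<Sum>(i,j)\<in>P. (z i ^ A - z j ^ A) * (z i ^ B - z j ^ B)) = (\<Sum>x\<in>P. h x + h (prod.swap x))"
    by (rule sum.cong) (auto simp: h_def algebra_simps power_add)
  also have "\<dots> = sum h P + (\<Sum>x\<in>P. h (prod.swap x))" by (simp add: sum.distrib)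
  also have "(\<Sum>x\<in>P. h (prod.swap x)) = sum h Q"
    by (rule sum.reindex_bij_witness[of _ prod.swap prod.swap]) (auto simp: P_def Q_def)
  also have "sum h D = 0" by (rule sum.neutral) (auto simp: D_def h_def power_add)
  hence "sum h P + sum h Q = sum h ({1..n}\<times>{1..n})"
    unfolding U using fP fQ fD
    by (subst sum.union_disjoint, auto simp: P_def Q_def D_def, subst sum.union_disjoint, auto)
  also have "\<dots> = (\<Sum>i\<in>{1..n}. \<Sum>j\<in>{1..n}. z i ^ (A+B) - z i ^ A * z j ^ B)"
    by (simp add: sum.cartesian_product h_def)
  also have "\<dots> = of_nat n * power_sum z n (A+B) - power_sum z n A * power_sum z n B"
    by (simp add: sum_subtractf power_sum_def sum_distrib_left sum_distrib_right sum.distrib)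
       (rule sum.swap)
  finally show ?thesis by (simp add: P_def)
qed

lemma e_pair:
  fixes z :: "nat \<Rightarrow> 'b::comm_ring_1"
  assumes ij: "1 \<le> i" "i < j" "j \<le> n"
  shows "(z i - z j) * e_ij z n i j r =
    (\<Sum>m\<le>r. (-1)^m * elem_sym z {1..n} (r-m) * (z i^(m+1) - z j^(m+1)))"
proof -
  define S where "S = {1..n} - {i,j}"
  have fS: "finite S" by (simp add: S_def)
  have jS: "j \<notin> S" and iS: "i \<notin> insert j S" using ij by (auto simp: S_def)
  have fjS: "finite (insert j S)" using fS by simp
  have U: "{1..n} = insert i (insert j S)" using ij by (auto simp: S_def)
  have a: "e_ij z n i j = elem_sym z S" by (rule ext) (simp add: e_ij_def S_def)
  show ?thesis unfolding a
  proof (rule B_identity)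
    show "elem_sym z {1..n} 0 = elem_sym z S 0" by (simp add: elem_sym_0 fS)
    show "elem_sym z {1..n} 1 = elem_sym z S 1 + (z i + z j) * elem_sym z S 0"
      unfolding U using elem_sym_insert[OF fjS iS, of z 0] elem_sym_insert[OF fS jS, of z 0]
      by (simp add: elem_sym_0 fS fjS algebra_simps)
    fix r
    show "elem_sym z {1..n} (Suc (Suc r)) = elem_sym z S (Suc (Suc r)) + (z i + z j) * elem_sym z S (Suc r) + (z i * z j) * elem_sym z S r"
      unfolding U using elem_sym_insert[OF fjS iS, of z "Suc r"] elem_sym_insert[OF fS jS, of z "Suc r"]
        elem_sym_insert[OF fS jS, of z r]
      by (simp add: algebra_simps)
  qed
qed

theorem mainTheorem1:
  fixes z :: "nat \<Rightarrow> 'a::comm_ring_1" and n k :: nat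
  assumes "n \<ge> 2" and "1 \<le> k" and "k \<le> n - 1"
  shows "of_nat ((\<Prod>i<k. fact i)^2) * of_nat n ^ (k - 1) * lead_minor (k + 1) (hermite_mat z n)
           = lead_minor k (E_mat z n)"
proof -
  define ps where "ps = power_sum z n"
  define ef where "ef = elem_sym z {1..n}"
  define Cf where "Cf = (\<lambda>r m. if m \<le> r then (-1)^m * ef (r-m) else (0::'a))"
  define M1 where "M1 = mat k k (\<lambda>(r,m). of_nat (fact r) * Cf r m)"
  define G where "G = Gm (of_nat n) ps k"
  define P where "P = {(i, j). 1 \<le> i \<and> i < j \<and> j \<le> n}"
  define d where "d = (\<lambda>m (i,j). z i ^ m - z j ^ m)"
  have M1c: "M1 \<in> carrier_mat k k" by (simp add: M1_def)
  have Gc: "G \<in> carrier_mat k k" by (simp add: G_def Gm_def)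
  have H: "lead_minor (k + 1) (hermite_mat z n) = det (Hm (of_nat n) ps k)"
    unfolding lead_minor_def
    by (rule arg_cong[of _ _ det], rule eq_matI)
       (auto simp: Hm_def hermite_mat_def ps_def power_sum_def)
  have Gentry: "G $$ (a,b) = (\<Sum>x\<in>P. d (a+1) x * d (b+1) x)" if "a < k" "b < k" for a b
  proof -
    have "G $$ (a,b) = of_nat n * ps (a+1+(b+1)) - ps (a+1) * ps (b+1)"
      using that by (simp add: G_def Gm_def add_ac)
    also have "\<dots> = (\<Sum>x\<in>P. d (a+1) x * d (b+1) x)"
      unfolding ps_def P_def d_def pair_sum[where z=z and n=n and A="a+1" and B="b+1", symmetric]
      by (rule sum.cong) auto
    finally show ?thesis .
  qed
  have W: "(z i - z j) * e_ij z n i j r = (\<Sum>m<k. Cf r m * d (m+1) (i,j))"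
    if "(i,j) \<in> P" "r < k" for i j r
  proof -
    have "(z i - z j) * e_ij z n i j r = (\<Sum>m\<le>r. (-1)^m * ef (r-m) * d (m+1) (i,j))"
      using e_pair[of i j n z r] that by (simp add: P_def ef_def d_def)
    also have "\<dots> = (\<Sum>m<k. Cf r m * d (m+1) (i,j))"
    proof -
      have "{..<k} \<inter> {m. m \<le> r} = {..r}" using that by auto
      thus ?thesis by (simp add: Cf_def if_distrib[where f="\<lambda>x. x * _"] sum.If_cases cong: if_cong)
    qed
    finally show ?thesis .
  qed
  have Eeq: "mat k k (\<lambda>(i, j). E_mat z n (i + 1) (j + 1)) = M1 * G * transpose_mat M1"
  proof (rule eq_matI)
    fix r s assume "r < dim_row (M1 * G * transpose_mat M1)" "s < dim_col (M1 * G * transpose_mat M1)"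
    hence r: "r < k" and s: "s < k" using M1c Gc by auto
    have "(M1 * G * transpose_mat M1) $$ (r,s) = (\<Sum>m<k. M1 $$ (r,m) * (\<Sum>l<k. G $$ (m,l) * M1 $$ (s,l)))"
      using r s M1c Gc by (simp add: index_mult_mat scalar_prod_def lessThan_atLeast0)
    also have "\<dots> = of_nat (fact r) * of_nat (fact s) * (\<Sum>m<k. \<Sum>l<k. Cf r m * Cf s l * G $$ (m,l))"
      using r s
      by (simp add: M1_def sum_distrib_left sum_distrib_right algebra_simps)
    also have "(\<Sum>m<k. \<Sum>l<k. Cf r m * Cf s l * G $$ (m,l)) = (\<Sum>m<k. \<Sum>l<k. \<Sum>x\<in>P. Cf r m * d (m+1) x * (Cf s l * d (l+1) x))"
      by (intro sum.cong refl) (simp add: Gentry sum_distrib_left algebra_simps)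
    also have "\<dots> = (\<Sum>x\<in>P. (\<Sum>m<k. Cf r m * d (m+1) x) * (\<Sum>l<k. Cf s l * d (l+1) x))"
    proof -
      have "(\<Sum>x\<in>P. (\<Sum>m<k. Cf r m * d (m+1) x) * (\<Sum>l<k. Cf s l * d (l+1) x))
         = (\<Sum>x\<in>P. \<Sum>m<k. \<Sum>l<k. Cf r m * d (m+1) x * (Cf s l * d (l+1) x))"
        by (simp only: sum_product)
      also have "\<dots> = (\<Sum>m<k. \<Sum>x\<in>P. \<Sum>l<k. Cf r m * d (m+1) x * (Cf s l * d (l+1) x))"
        by (rule sum.swap)
      also have "\<dots> = (\<Sum>m<k. \<Sum>l<k. \<Sum>x\<in>P. Cf r m * d (m+1) x * (Cf s l * d (l+1) x))"
        by (intro sum.cong refl) (rule sum.swap)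
      finally show ?thesis by simp
    qed
    also have "\<dots> = (\<Sum>x\<in>P. case x of (i,j) \<Rightarrow> e_ij z n i j r * e_ij z n i j s * (z i - z j)^2)"
    proof (rule sum.cong[OF refl])
      fix x assume x: "x \<in> P"
      obtain i j where x': "x = (i,j)" by (cases x)
      show "(\<Sum>m<k. Cf r m * d (m+1) x) * (\<Sum>l<k. Cf s l * d (l+1) x) = (case x of (i,j) \<Rightarrow> e_ij z n i j r * e_ij z n i j s * (z i - z j)^2)"
        using x unfolding x' case_prod_conv W[OF x[unfolded x'] r, symmetric] W[OF x[unfolded x'] s, symmetric]
        by (simp add: power2_eq_square algebra_simps)
    qed
    finally show "mat k k (\<lambda>(i, j). E_mat z n (i + 1) (j + 1)) $$ (r,s) = (M1 * G * transpose_mat M1) $$ (r,s)"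
      using r s by (simp add: E_mat_def P_def)
  qed (auto simp: M1_def G_def Gm_def)
  have detM1: "det M1 = (\<Prod>r<k. of_nat (fact r) * (-1)^r)"
  proof -
    have "det M1 = prod_list (diag_mat M1)"
      by (rule det_lower_triangular[OF _ M1c]) (auto simp: M1_def Cf_def)
    also have "\<dots> = (\<Prod>r<k. M1 $$ (r,r))" by (rule prod_list_diag[OF M1c])
    also have "\<dots> = (\<Prod>r<k. of_nat (fact r) * (-1)^r)"
      by (rule prod.cong) (auto simp: M1_def Cf_def ef_def elem_sym_0)
    finally show ?thesis .
  qed
  have "lead_minor k (E_mat z n) = det M1 * det G * det (transpose_mat M1)"
    unfolding lead_minor_def Eeq
    using M1c Gc by (simp add: det_mult[of _ k] mult_carrier_mat)
  also have "det (transpose_mat M1) = det M1" by (rule det_transpose[OF M1c])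
  also have "det G = of_nat n ^ (k-1) * det (Hm (of_nat n) ps k)"
    unfolding G_def using schur_ring[OF assms(2), of "of_nat n" ps] by simp
  finally have "lead_minor k (E_mat z n) = det M1 * det M1 * of_nat n ^ (k-1) * lead_minor (k + 1) (hermite_mat z n)"
    using H by (simp add: algebra_simps)
  also have "det M1 * det M1 = of_nat ((\<Prod>i<k. fact i)^2)"
    unfolding detM1 by (simp add: prod.distrib[symmetric] power2_eq_square algebra_simps flip: power_add mult_2)
  finally show ?thesis by simp
qed

end
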